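(* Let $G=(V,E,\{c_e\}_{e\in E})$ be a finite connected undirected graph with at least two vertices, positive conductances and arbitrarily oriented edges. Let $w\in\mathbb{R}^E_{>0}$ and define $\mu_w(x):=\frac{1}{2\|w\|_2^2}\sum_{e:\,x\in e}w_e^2$, $M:=\operatorname{diag}(\mu_w)$, and $H_t:=\exp(-tM^{-1}L)M^{-1}$ for $t\ge0$. Then $$\int_0^\infty w^\top\left|C^{1/2}BH_tB^\top C^{1/2}\right|w\,dt\le 2\|w\|_2^2H(\mu_w),$$ where the absolute value of a matrix is taken entrywise and $H(\mu)=-\sum_x\mu(x)\log\mu(x)$ is the natural-log entropy.
   Context: For a vertex $v$, $\mathbbm{1}_v\in\mathbb{R}^V$ is the standard basis vector. For an edge $e$ oriented from $e^-$ to $e^+$, $b_e:=\mathbbm{1}_{e^+}-\mathbbm{1}_{e^-}$; $B\in\mathbb{R}^{E\times V}$ is the matrix with rows $b_e^\top$; $C=\operatorname{diag}(c_e)$; $L=B^\top CB$ is the Laplacian. The matrix exponential is $\exp(A)=\sum_{k\ge0}A^k/k!$. Graphs have no self-loops. *)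

theory Defs
  imports "HOL-Analysis.Analysis"
begin

text \<open>A finite multigraph with oriented edges: each edge e goes from
  src e (= e^-) to tgt e (= e^+).  Vertices are the finite type 'v, edges the
  finite type 'e.\<close>

definition no_self_loops :: "('e \<Rightarrow> 'v) \<Rightarrow> ('e \<Rightarrow> 'v) \<Rightarrow> bool" where
  "no_self_loops src tgt \<longleftrightarrow> (\<forall>e. src e \<noteq> tgt e)"

definition adj_rel :: "('e \<Rightarrow> 'v) \<Rightarrow> ('e \<Rightarrow> 'v) \<Rightarrow> ('v \<times> 'v) set" where
  "adj_rel src tgt = {(src e, tgt e) | e. True} \<union> {(tgt e, src e) | e. True}"

definition graph_connected :: "('e \<Rightarrow> 'v) \<Rightarrow> ('e \<Rightarrow> 'v) \<Rightarrow> bool" where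
  "graph_connected src tgt \<longleftrightarrow> (\<forall>u v. (u, v) \<in> (adj_rel src tgt)\<^sup>*)"

definition incidence :: "('e \<Rightarrow> 'v) \<Rightarrow> ('e \<Rightarrow> 'v) \<Rightarrow> real^'v^'e" where
  "incidence src tgt = (\<chi> e v. (if v = tgt e then 1 else 0) - (if v = src e then 1 else 0))"

definition diag_mat :: "('n \<Rightarrow> real) \<Rightarrow> real^'n^'n" where
  "diag_mat d = (\<chi> i j. if i = j then d i else 0)"

definition laplacian :: "('e::finite \<Rightarrow> 'v::finite) \<Rightarrow> ('e \<Rightarrow> 'v) \<Rightarrow> ('e \<Rightarrow> real) \<Rightarrow> real^'v^'v" where
  "laplacian src tgt c = transpose (incidence src tgt) ** diag_mat c ** incidence src tgt"

fun mat_pow :: "real^'n^'n \<Rightarrow> nat \<Rightarrow> real^'n^'n" where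
  "mat_pow A 0 = mat 1"
| "mat_pow A (Suc k) = A ** mat_pow A k"

definition mat_exp :: "real^'n^'n \<Rightarrow> real^'n^'n" where
  "mat_exp A = (\<Sum>k. (1 / fact k) *\<^sub>R mat_pow A k)"

definition mu_w :: "('e::finite \<Rightarrow> 'v) \<Rightarrow> ('e \<Rightarrow> 'v) \<Rightarrow> ('e \<Rightarrow> real) \<Rightarrow> 'v \<Rightarrow> real" where
  "mu_w src tgt w x = (\<Sum>e | x = src e \<or> x = tgt e. (w e)^2) / (2 * (\<Sum>e\<in>UNIV. (w e)^2))"

definition entropy :: "('v::finite \<Rightarrow> real) \<Rightarrow> real" where
  "entropy \<mu> = - (\<Sum>x\<in>UNIV. \<mu> x * ln (\<mu> x))"

definition heat_kernel :: "('e::finite \<Rightarrow> 'v::finite) \<Rightarrow> ('e \<Rightarrow> 'v) \<Rightarrow> ('e \<Rightarrow> real) \<Rightarrow> ('e \<Rightarrow> real) \<Rightarrow> real \<Rightarrow> real^'v^'v" where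
  "heat_kernel src tgt c w t =
     (let Minv = diag_mat (\<lambda>x. 1 / mu_w src tgt w x)
      in mat_exp ((- t) *\<^sub>R (Minv ** laplacian src tgt c)) ** Minv)"

definition integrand :: "('e::finite \<Rightarrow> 'v::finite) \<Rightarrow> ('e \<Rightarrow> 'v) \<Rightarrow> ('e \<Rightarrow> real) \<Rightarrow> ('e \<Rightarrow> real) \<Rightarrow> real \<Rightarrow> real" where
  "integrand src tgt c w t =
     (let Ch = diag_mat (\<lambda>e. sqrt (c e)); B = incidence src tgt;
          A = Ch ** B ** heat_kernel src tgt c w t ** transpose B ** Ch
      in \<Sum>e\<in>UNIV. \<Sum>f\<in>UNIV. w e * \<bar>A $ e $ f\<bar> * w f)"

end

theory Submission
  imports Defs
begin

lemma mat_pow_Suc_right: "mat_pow A (Suc k) = mat_pow A k ** A"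
  by (induction k) (simp_all add: matrix_mul_assoc)

lemma mat_pow_entry_Suc: "mat_pow A (Suc k) $ i $ j = (\<Sum>l\<in>UNIV. A $ i $ l * mat_pow A k $ l $ j)"
  by (simp add: matrix_matrix_mult_def)

lemma mat_pow_entry_Suc': "mat_pow A (Suc k) $ i $ j = (\<Sum>l\<in>UNIV. mat_pow A k $ i $ l * A $ l $ j)"
  by (simp only: mat_pow_Suc_right) (simp add: matrix_matrix_mult_def)

definition nrm1 :: "real^'n^'n \<Rightarrow> real" where
  "nrm1 A = (\<Sum>i\<in>UNIV. \<Sum>j\<in>UNIV. \<bar>A $ i $ j\<bar>)"

lemma entry_le_nrm1: "\<bar>A $ i $ j\<bar> \<le> nrm1 (A::real^'n^'n)"
proof -
  have "\<bar>A $ i $ j\<bar> \<le> (\<Sum>j\<in>UNIV. \<bar>A $ i $ j\<bar>)"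
    by (rule member_le_sum) auto
  also have "\<dots> \<le> nrm1 A" unfolding nrm1_def
    by (rule member_le_sum[where f="\<lambda>i. \<Sum>j\<in>UNIV. \<bar>A $ i $ j\<bar>"]) (auto intro: sum_nonneg)
  finally show ?thesis .
qed

lemma row_le_nrm1: "(\<Sum>j\<in>UNIV. \<bar>A $ i $ j\<bar>) \<le> nrm1 (A::real^'n^'n)"
  unfolding nrm1_def
  by (rule member_le_sum[where f="\<lambda>i. \<Sum>j\<in>UNIV. \<bar>A $ i $ j\<bar>"]) (auto intro: sum_nonneg)

lemma nrm1_nonneg: "0 \<le> nrm1 A"
  unfolding nrm1_def by (auto intro: sum_nonneg)

lemma mat_pow_bound: "\<bar>mat_pow A k $ i $ j\<bar> \<le> nrm1 A ^ k"
proof (induction k arbitrary: i j)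
  case 0
  then show ?case by (simp add: mat_def)
next
  case (Suc k)
  have "\<bar>mat_pow A (Suc k) $ i $ j\<bar> \<le> (\<Sum>l\<in>UNIV. \<bar>A $ i $ l\<bar> * \<bar>mat_pow A k $ l $ j\<bar>)"
    unfolding mat_pow_entry_Suc by (rule order_trans[OF sum_abs]) (simp add: abs_mult)
  also have "\<dots> \<le> (\<Sum>l\<in>UNIV. \<bar>A $ i $ l\<bar> * nrm1 A ^ k)"
    by (intro sum_mono mult_left_mono Suc.IH) auto
  also have "\<dots> = (\<Sum>l\<in>UNIV. \<bar>A $ i $ l\<bar>) * nrm1 A ^ k"
    by (simp add: sum_distrib_right)
  also have "\<dots> \<le> nrm1 A * nrm1 A ^ k"
    by (intro mult_right_mono row_le_nrm1) (simp add: nrm1_nonneg)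
  finally show ?case by simp
qed

lemma diffs_fact: "diffs (\<lambda>k. (M k::real) / fact k) k = M (Suc k) / fact k"
  unfolding diffs_def by (simp add: fact_Suc divide_simps del: of_nat_Suc)

definition ent :: "real^'n^'n \<Rightarrow> real \<Rightarrow> 'n \<Rightarrow> 'n \<Rightarrow> real" where
  "ent A s i j = (\<Sum>k. (mat_pow A k $ i $ j / fact k) * s ^ k)"

lemma ent_summable: "summable (\<lambda>k. (mat_pow A k $ i $ j / fact k) * s ^ k)"
proof (rule summable_comparison_test')
  show "summable (\<lambda>k. inverse (fact k) * (nrm1 A * \<bar>s\<bar>) ^ k)"
    by (rule summable_exp)
  fix k
  have "norm (mat_pow A k $ i $ j / fact k * s ^ k) = (\<bar>mat_pow A k $ i $ j\<bar> * \<bar>s\<bar> ^ k) / fact k"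
    by (simp add: abs_mult power_abs)
  also have "\<dots> \<le> (nrm1 A ^ k * \<bar>s\<bar> ^ k) / fact k"
    by (intro divide_right_mono mult_right_mono mat_pow_bound) auto
  also have "\<dots> = inverse (fact k) * (nrm1 A * \<bar>s\<bar>) ^ k"
    by (simp add: power_mult_distrib divide_inverse mult_ac)
  finally show "norm (mat_pow A k $ i $ j / fact k * s ^ k) \<le> inverse (fact k) * (nrm1 A * \<bar>s\<bar>) ^ k" .
qed

lemma ent_zero: "ent A 0 i j = (if i = j then 1 else 0)"
  unfolding ent_def by (subst powser_zero) (simp add: mat_def)

lemma ent_deriv_left:
  "((\<lambda>s. ent A s i j) has_field_derivative (\<Sum>l\<in>UNIV. A $ i $ l * ent A s l j)) (at s)"
proof -
  let ?c = "\<lambda>k. mat_pow A k $ i $ j / fact k"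
  have d: "((\<lambda>s. \<Sum>k. ?c k * s ^ k) has_field_derivative (\<Sum>k. diffs ?c k * s ^ k)) (at s)"
    by (rule termdiffs_strong_converges_everywhere) (rule ent_summable)
  have "diffs ?c k * s ^ k = (\<Sum>l\<in>UNIV. A $ i $ l * (mat_pow A k $ l $ j / fact k * s ^ k))" for k
    unfolding diffs_fact mat_pow_entry_Suc
    by (simp add: sum_distrib_left sum_divide_distrib sum_distrib_right field_simps)
  then have "(\<Sum>k. diffs ?c k * s ^ k) = (\<Sum>k. \<Sum>l\<in>UNIV. A $ i $ l * (mat_pow A k $ l $ j / fact k * s ^ k))"
    by simp
  also have "\<dots> = (\<Sum>l\<in>UNIV. \<Sum>k. A $ i $ l * (mat_pow A k $ l $ j / fact k * s ^ k))"
    by (rule suminf_sum) (intro summable_mult ent_summable)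
  also have "\<dots> = (\<Sum>l\<in>UNIV. A $ i $ l * ent A s l j)"
    unfolding ent_def by (intro sum.cong refl) (rule suminf_mult[OF ent_summable])
  finally show ?thesis using d unfolding ent_def by simp
qed

lemma ent_deriv_right:
  "((\<lambda>s. ent A s i j) has_field_derivative (\<Sum>l\<in>UNIV. ent A s i l * A $ l $ j)) (at s)"
proof -
  let ?c = "\<lambda>k. mat_pow A k $ i $ j / fact k"
  have d: "((\<lambda>s. \<Sum>k. ?c k * s ^ k) has_field_derivative (\<Sum>k. diffs ?c k * s ^ k)) (at s)"
    by (rule termdiffs_strong_converges_everywhere) (rule ent_summable)
  have "diffs ?c k * s ^ k = (\<Sum>l\<in>UNIV. A $ l $ j * (mat_pow A k $ i $ l / fact k * s ^ k))" for k
    unfolding diffs_fact mat_pow_entry_Suc'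
    by (simp add: sum_distrib_left sum_divide_distrib sum_distrib_right field_simps)
  then have "(\<Sum>k. diffs ?c k * s ^ k) = (\<Sum>k. \<Sum>l\<in>UNIV. A $ l $ j * (mat_pow A k $ i $ l / fact k * s ^ k))"
    by simp
  also have "\<dots> = (\<Sum>l\<in>UNIV. \<Sum>k. A $ l $ j * (mat_pow A k $ i $ l / fact k * s ^ k))"
    by (rule suminf_sum) (intro summable_mult ent_summable)
  also have "\<dots> = (\<Sum>l\<in>UNIV. ent A s i l * A $ l $ j)"
    unfolding ent_def by (intro sum.cong refl) (subst suminf_mult[OF ent_summable], simp add: mult.commute)
  finally show ?thesis using d unfolding ent_def by simp
qed

lemma scaleR_mat_mult: "(a *\<^sub>R X) ** (b *\<^sub>R Y) = (a * b) *\<^sub>R (X ** (Y::real^'n^'n))"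
  by (simp add: vec_eq_iff matrix_matrix_mult_def sum_distrib_left mult_ac)

lemma mat_pow_scaleR: "mat_pow (r *\<^sub>R A) k = (r ^ k) *\<^sub>R mat_pow A k"
proof (induction k)
  case 0 then show ?case by simp
next
  case (Suc k)
  have "mat_pow (r *\<^sub>R A) (Suc k) = (r *\<^sub>R A) ** ((r ^ k) *\<^sub>R mat_pow A k)"
    using Suc by simp
  also have "\<dots> = (r * r ^ k) *\<^sub>R (A ** mat_pow A k)" by (rule scaleR_mat_mult)
  finally show ?case by simp
qed

lemma vec_sums:
  fixes f :: "nat \<Rightarrow> real^'m^'n"
  assumes "\<And>i j. (\<lambda>k. f k $ i $ j) sums S i j"
  shows "f sums (\<chi> i j. S i j)"
proof -
  have eq: "(\<Sum>k<n. f k) = (\<chi> i j. \<Sum>k<n. f k $ i $ j)" for n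
    by (simp add: vec_eq_iff sum_component)
  show ?thesis
    unfolding sums_def eq
    using assms unfolding sums_def by (intro tendsto_vec_lambda) auto
qed

lemma mat_exp_entry: "mat_exp (r *\<^sub>R A) $ i $ j = ent A r i j"
proof -
  have "(\<lambda>k. (1 / fact k) *\<^sub>R mat_pow (r *\<^sub>R A) k) sums (\<chi> i j. ent A r i j)"
  proof (rule vec_sums)
    fix i j
    have "(\<lambda>k. (mat_pow A k $ i $ j / fact k) * r ^ k) sums ent A r i j"
      unfolding ent_def by (rule summable_sums[OF ent_summable])
    then show "(\<lambda>k. ((1 / fact k) *\<^sub>R mat_pow (r *\<^sub>R A) k) $ i $ j) sums ent A r i j"
      by (simp add: mat_pow_scaleR mult_ac)
  qed
  then show ?thesis unfolding mat_exp_def by (simp add: sums_iff)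
qed

lemma ent_deriv_rev:
  "((\<lambda>r. ent A (T - r) i j) has_field_derivative - (\<Sum>l\<in>UNIV. ent A (T - r) i l * A $ l $ j)) (at r)"
proof -
  have "((\<lambda>r. ent A (T - r) i j) has_field_derivative (\<Sum>l\<in>UNIV. ent A (T - r) i l * A $ l $ j) * (-1)) (at r)"
    by (rule DERIV_chain2[OF ent_deriv_right]) (auto intro!: derivative_eq_intros)
  then show ?thesis by simp
qed

lemma sum_swap_mult:
  fixes a b :: "'n::finite \<Rightarrow> real"
  shows "(\<Sum>l\<in>UNIV. (\<Sum>m\<in>UNIV. a m * A $ m $ l) * b l) = (\<Sum>l\<in>UNIV. a l * (\<Sum>m\<in>UNIV. A $ l $ m * b m))"
  by (simp add: sum_distrib_left sum_distrib_right mult_ac) (rule sum.swap)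

lemma const_prod:
  fixes X Y :: "real \<Rightarrow> 'n::finite \<Rightarrow> 'n \<Rightarrow> real"
  assumes X: "\<And>r l. ((\<lambda>r. X r i l) has_field_derivative - (\<Sum>m\<in>UNIV. X r i m * A $ m $ l)) (at r)"
    and Y: "\<And>r l. ((\<lambda>r. Y r l j) has_field_derivative (\<Sum>m\<in>UNIV. A $ l $ m * Y r m j)) (at r)"
  shows "(\<Sum>l\<in>UNIV. X r i l * Y r l j) = (\<Sum>l\<in>UNIV. X r' i l * Y r' l j)"
proof (rule DERIV_isconst_all[where f="\<lambda>r. \<Sum>l\<in>UNIV. X r i l * Y r l j"], intro allI)
  fix x
  have "((\<lambda>r. \<Sum>l\<in>UNIV. X r i l * Y r l j) has_field_derivative
     (\<Sum>l\<in>UNIV. X x i l * (\<Sum>m\<in>UNIV. A $ l $ m * Y x m j) + - (\<Sum>m\<in>UNIV. X x i m * A $ m $ l) * Y x l j)) (at x)"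
    by (intro DERIV_sum DERIV_mult' X Y)
  moreover have "(\<Sum>l\<in>UNIV. X x i l * (\<Sum>m\<in>UNIV. A $ l $ m * Y x m j) + - (\<Sum>m\<in>UNIV. X x i m * A $ m $ l) * Y x l j) = 0"
    using sum_swap_mult[of "\<lambda>m. X x i m" A "\<lambda>l. Y x l j"] by (simp add: sum.distrib sum_negf sum_subtractf)
  ultimately show "((\<lambda>r. \<Sum>l\<in>UNIV. X r i l * Y r l j) has_field_derivative 0) (at x)" by simp
qed

lemma sum_delta_left: "(\<Sum>l\<in>UNIV. (if i = l then 1 else 0) * (f l :: real)) = f (i::'n::finite)"
  by (subst sum.cong[OF refl, of _ _ "\<lambda>l. if i = l then f l else 0"]) auto
lemma sum_delta_right: "(\<Sum>l\<in>UNIV. (f l :: real) * (if l = j then 1 else 0)) = f (j::'n::finite)"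
  by (subst sum.cong[OF refl, of _ _ "\<lambda>l. if l = j then f l else 0"]) auto

lemma sum_delta_gen: "(\<Sum>m\<in>UNIV. (if l = m then a else 0) * f m) = a * (f (l::'n::finite) :: real)"
  by (subst sum.cong[OF refl, of _ _ "\<lambda>m. if l = m then a * f m else 0"]) auto

lemma ent_semigroup: "ent A (s + t) i j = (\<Sum>l\<in>UNIV. ent A s i l * ent A t l j)"
proof -
  have "(\<Sum>l\<in>UNIV. ent A (s + t - r) i l * ent A r l j) = (\<Sum>l\<in>UNIV. ent A (s + t - r') i l * ent A r' l j)" for r r'
    by (rule const_prod[where X="\<lambda>r. ent A (s + t - r)" and Y="\<lambda>r. ent A r"])
       (rule ent_deriv_rev, rule ent_deriv_left)
  from this[of 0 t] show ?thesis by (simp add: ent_zero sum_delta_right)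
qed

lemma ent_nonneg:
  assumes off: "\<And>i j. i \<noteq> j \<Longrightarrow> 0 \<le> A $ i $ j" and "0 \<le> t"
  shows "0 \<le> ent A t i j"
proof -
  define a where "a = nrm1 A"
  define N where "N = A + a *\<^sub>R mat 1"
  have Nent: "N $ i $ j = A $ i $ j + (if i = j then a else 0)" for i j
    by (simp add: N_def mat_def)
  have Nnn: "0 \<le> N $ i $ j" for i j
  proof (cases "i = j")
    case True
    then show ?thesis using entry_le_nrm1[of A i i] by (simp add: Nent a_def)
  next
    case False then show ?thesis using off[OF False] by (simp add: Nent)
  qed
  have powN: "0 \<le> mat_pow N k $ i $ j" for k i j
  proof (induction k arbitrary: i j)
    case 0 then show ?case by (simp add: mat_def)
  next
    case (Suc k) then show ?case
      by (simp only: mat_pow_entry_Suc) (intro sum_nonneg mult_nonneg_nonneg Nnn Suc.IH)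
  qed
  define R where "R r i j = exp (- a * r) * ent N r i j" for r i j
  have Rnn: "0 \<le> r \<Longrightarrow> 0 \<le> R r i j" for r i j
    unfolding R_def ent_def
    by (intro mult_nonneg_nonneg suminf_nonneg ent_summable) (auto intro!: divide_nonneg_nonneg powN)
  have Rd: "((\<lambda>r. R r l j) has_field_derivative (\<Sum>m\<in>UNIV. A $ l $ m * R r m j)) (at r)" for r l
  proof -
    have e: "((\<lambda>r. exp (- a * r)) has_field_derivative exp (- a * r) * (- a)) (at r)"
      by (auto intro!: derivative_eq_intros)
    have "((\<lambda>r. R r l j) has_field_derivative
         exp (- a * r) * (\<Sum>m\<in>UNIV. N $ l $ m * ent N r m j) + (exp (- a * r) * (- a)) * ent N r l j) (at r)"
      unfolding R_def by (rule DERIV_mult'[OF e ent_deriv_left])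
    moreover have "exp (- a * r) * (\<Sum>m\<in>UNIV. N $ l $ m * ent N r m j) + (exp (- a * r) * (- a)) * ent N r l j
        = (\<Sum>m\<in>UNIV. A $ l $ m * R r m j)"
    proof -
      have "(\<Sum>m\<in>UNIV. N $ l $ m * ent N r m j) = (\<Sum>m\<in>UNIV. A $ l $ m * ent N r m j) + a * ent N r l j"
        unfolding Nent distrib_right sum.distrib sum_delta_gen ..
      then show ?thesis unfolding R_def by (simp add: algebra_simps sum_distrib_left)
    qed
    ultimately show ?thesis by simp
  qed
  have "(\<Sum>l\<in>UNIV. ent A (t - r) i l * R r l j) = (\<Sum>l\<in>UNIV. ent A (t - r') i l * R r' l j)" for r r'
    by (rule const_prod[where X="\<lambda>r. ent A (t - r)" and Y=R]) (rule ent_deriv_rev, rule Rd)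
  from this[of 0 t] have "ent A t i j = R t i j"
    by (simp add: ent_zero sum_delta_right sum_delta_left R_def)
  then show ?thesis using Rnn[OF \<open>0 \<le> t\<close>] by simp
qed

lemma ent_rowsum:
  assumes "\<And>i. (\<Sum>j\<in>UNIV. A $ i $ j) = 0"
  shows "(\<Sum>j\<in>UNIV. ent A t i j) = 1"
proof -
  have "(\<Sum>j\<in>UNIV. ent A t i j) = (\<Sum>j\<in>UNIV. ent A 0 i j)"
  proof (rule DERIV_isconst_all[where f="\<lambda>t. \<Sum>j\<in>UNIV. ent A t i j"], intro allI)
    fix x
    have "((\<lambda>t. \<Sum>j\<in>UNIV. ent A t i j) has_field_derivative (\<Sum>j\<in>UNIV. \<Sum>l\<in>UNIV. ent A x i l * A $ l $ j)) (at x)"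
      by (intro DERIV_sum ent_deriv_right)
    moreover have "(\<Sum>j\<in>UNIV. \<Sum>l\<in>UNIV. ent A x i l * A $ l $ j) = 0"
      by (subst sum.swap) (simp add: sum_distrib_left[symmetric] assms)
    ultimately show "((\<lambda>t. \<Sum>j\<in>UNIV. ent A t i j) has_field_derivative 0) (at x)" by simp
  qed
  then show ?thesis by (simp add: ent_zero)
qed

lemma ent_reversible:
  assumes "\<And>i j. m i * A $ i $ j = m j * A $ j $ i"
  shows "m i * ent A t i j = m j * ent A t j i"
proof -
  have pw: "m i * mat_pow A k $ i $ j = m j * mat_pow A k $ j $ i" for k i j
  proof (induction k arbitrary: i j)
    case 0 then show ?case by (simp add: mat_def)
  next
    case (Suc k)
    have "m i * mat_pow A (Suc k) $ i $ j = (\<Sum>l\<in>UNIV. (m i * A $ i $ l) * mat_pow A k $ l $ j)"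
      by (simp only: mat_pow_entry_Suc) (simp add: sum_distrib_left mult_ac)
    also have "\<dots> = (\<Sum>l\<in>UNIV. A $ l $ i * (m l * mat_pow A k $ l $ j))"
      by (intro sum.cong refl) (simp add: assms[of i] mult_ac)
    also have "\<dots> = (\<Sum>l\<in>UNIV. A $ l $ i * (m j * mat_pow A k $ j $ l))"
      by (simp add: Suc.IH)
    also have "\<dots> = m j * mat_pow A (Suc k) $ j $ i"
      by (simp only: mat_pow_entry_Suc') (simp add: sum_distrib_left mult_ac)
    finally show ?case .
  qed
  have "m i * ent A t i j = (\<Sum>k. m i * (mat_pow A k $ i $ j / fact k * t ^ k))"
    unfolding ent_def by (rule suminf_mult[OF ent_summable, symmetric])
  also have "\<dots> = (\<Sum>k. m j * (mat_pow A k $ j $ i / fact k * t ^ k))"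
  proof (rule arg_cong[where f=suminf], rule ext)
    fix k
    show "m i * (mat_pow A k $ i $ j / fact k * t ^ k) = m j * (mat_pow A k $ j $ i / fact k * t ^ k)"
      using pw[of i k j] by (metis (no_types, lifting) mult.assoc times_divide_eq_right)
  qed
  also have "\<dots> = m j * ent A t j i"
    unfolding ent_def by (rule suminf_mult[OF ent_summable])
  finally show ?thesis .
qed

lemma sdl: "(\<Sum>m\<in>UNIV. (if l = m then a m else 0) * f m) = a l * (f (l::'n::finite) :: real)"
  by (subst sum.cong[OF refl, of _ _ "\<lambda>m. if m = l then a m * f m else 0"]) auto
lemma sdr: "(\<Sum>m\<in>UNIV. f m * (if m = l then a m else 0)) = f (l::'n::finite) * (a l :: real)"
  by (subst sum.cong[OF refl, of _ _ "\<lambda>m. if m = l then f m * a m else 0"]) auto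
lemma mm_entry: "(X ** Y) $ i $ j = (\<Sum>k\<in>UNIV. X $ i $ k * Y $ k $ j :: real)"
  by (simp add: matrix_matrix_mult_def)
lemma diag_ent: "diag_mat d $ i $ j = (if i = j then d i else 0)"
  by (simp add: diag_mat_def)
lemma diag_left: "(diag_mat d ** X) $ i $ j = d i * X $ i $ j"
  unfolding mm_entry diag_ent by (rule sdl)
lemma diag_right: "(X ** diag_mat d) $ i $ j = X $ i $ j * d j"
  unfolding mm_entry diag_ent by (rule sdr)
lemma transpose_ent: "transpose A $ i $ j = A $ j $ i"
  by (simp add: transpose_def)

locale gsetup =
  fixes src tgt :: "'e::finite \<Rightarrow> 'v::finite" and c w :: "'e \<Rightarrow> real"
  assumes nsl: "\<And>e. src e \<noteq> tgt e" and cpos: "\<And>e. c e > 0" and wpos: "\<And>e. w e > 0"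
    and inc: "\<And>x. \<exists>e. x = src e \<or> x = tgt e"
begin

definition "W = (\<Sum>e\<in>UNIV. (w e)^2)"
definition "\<mu> = mu_w src tgt w"
definition "bb e x = (if x = tgt e then 1 else 0) - (if x = src e then (1::real) else 0)"
definition "Lp x y = (\<Sum>e\<in>UNIV. c e * bb e x * bb e y)"
definition "Am = (\<chi> x y. - Lp x y / \<mu> x)"
definition "P t x y = ent Am t x y"
definition "nab e u = (\<Sum>x\<in>UNIV. bb e x * u x)"

lemma W_pos: "W > 0"
proof -
  obtain e :: 'e where True by blast
  have "0 < (w e)^2" using wpos[of e] by simp
  also have "\<dots> \<le> W" unfolding W_def by (rule member_le_sum) auto
  finally show ?thesis .
qed

lemma nab_eq: "nab e u = u (tgt e) - u (src e)"
proof -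
  have "bb e x * u x = (if x = tgt e then u x else 0) - (if x = src e then u x else 0)" for x
    by (simp add: bb_def)
  then show ?thesis unfolding nab_def by (simp add: sum_subtractf)
qed

lemma sum_bb: "(\<Sum>x\<in>UNIV. bb e x) = 0"
  unfolding bb_def by (simp add: sum_subtractf)

lemma inc_sum:
  "(\<Sum>x\<in>UNIV. g x * (\<Sum>e | x = src e \<or> x = tgt e. (w e)^2)) = (\<Sum>e\<in>UNIV. (w e)^2 * (g (src e) + g (tgt e)))"
proof -
  have "(\<Sum>x\<in>UNIV. g x * (\<Sum>e | x = src e \<or> x = tgt e. (w e)^2))
      = (\<Sum>x\<in>UNIV. \<Sum>e\<in>UNIV. if x = src e \<or> x = tgt e then g x * (w e)^2 else 0)"
    by (simp add: sum_distrib_left sum.inter_filter[symmetric] if_distrib)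
  also have "\<dots> = (\<Sum>e\<in>UNIV. \<Sum>x\<in>UNIV. if x = src e \<or> x = tgt e then g x * (w e)^2 else 0)"
    by (rule sum.swap)
  also have "\<dots> = (\<Sum>e\<in>UNIV. (w e)^2 * (g (src e) + g (tgt e)))"
  proof (rule sum.cong[OF refl])
    fix e
    have "(\<Sum>x\<in>UNIV. if x = src e \<or> x = tgt e then g x * (w e)^2 else 0)
        = (\<Sum>x\<in>UNIV. (if x = src e then g x * (w e)^2 else 0) + (if x = tgt e then g x * (w e)^2 else 0))"
      using nsl[of e] by (intro sum.cong refl) auto
    then show "(\<Sum>x\<in>UNIV. if x = src e \<or> x = tgt e then g x * (w e)^2 else 0) = (w e)^2 * (g (src e) + g (tgt e))"
      by (simp add: sum.distrib algebra_simps)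
  qed
  finally show ?thesis .
qed

lemma mu_sum: "(\<Sum>x\<in>UNIV. \<mu> x * g x) = (\<Sum>e\<in>UNIV. (w e)^2 * (g (src e) + g (tgt e))) / (2 * W)"
proof -
  have "\<mu> x * g x = g x * (\<Sum>e | x = src e \<or> x = tgt e. (w e)^2) / (2 * W)" for x
    unfolding \<mu>_def mu_w_def W_def by simp
  then have "(\<Sum>x\<in>UNIV. \<mu> x * g x) = (\<Sum>x\<in>UNIV. g x * (\<Sum>e | x = src e \<or> x = tgt e. (w e)^2) / (2 * W))"
    by simp
  also have "\<dots> = (\<Sum>x\<in>UNIV. g x * (\<Sum>e | x = src e \<or> x = tgt e. (w e)^2)) / (2 * W)"
    by (rule sum_divide_distrib[symmetric])
  finally have "(\<Sum>x\<in>UNIV. \<mu> x * g x) = (\<Sum>x\<in>UNIV. g x * (\<Sum>e | x = src e \<or> x = tgt e. (w e)^2)) / (2 * W)" .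
  then show ?thesis by (simp add: inc_sum)
qed

lemma mu_total: "(\<Sum>x\<in>UNIV. \<mu> x) = 1"
proof -
  have "(\<Sum>e\<in>UNIV. (w e)^2 * (1 + 1)) = 2 * W"
    by (simp add: W_def sum_distrib_left mult.commute)
  then show ?thesis using mu_sum[of "\<lambda>_. 1"] W_pos by simp
qed

lemma mu_pos: "\<mu> x > 0"
proof -
  obtain e where e: "x = src e \<or> x = tgt e" using inc by blast
  have "0 < (w e)^2" using wpos[of e] by simp
  also have "\<dots> \<le> (\<Sum>e | x = src e \<or> x = tgt e. (w e)^2)"
    by (rule member_le_sum) (use e in auto)
  finally show ?thesis unfolding \<mu>_def mu_w_def using W_pos by (simp add: W_def)
qed

lemma inc_ent: "incidence src tgt $ e $ x = bb e x"
  by (simp add: incidence_def bb_def)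

lemma lap_entry: "laplacian src tgt c $ x $ y = Lp x y"
  unfolding laplacian_def Lp_def mm_entry[of "transpose (incidence src tgt) ** diag_mat c"] diag_right
    transpose_ent inc_ent by (simp add: mult_ac)

lemma Lp_sym: "Lp x y = Lp y x"
  unfolding Lp_def by (simp add: mult_ac)

lemma Lp_rowsum: "(\<Sum>y\<in>UNIV. Lp x y) = 0"
  unfolding Lp_def by (subst sum.swap) (simp add: sum_distrib_left[symmetric] sum_bb)

lemma Lp_off: "x \<noteq> y \<Longrightarrow> Lp x y \<le> 0"
  unfolding Lp_def
proof (intro sum_nonpos)
  fix e assume "x \<noteq> y"
  then have "bb e x * bb e y \<le> 0" using nsl[of e] unfolding bb_def by auto
  then show "c e * bb e x * bb e y \<le> 0"
    using cpos[of e] by (simp add: mult.assoc mult_nonneg_nonpos)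
qed

lemma Am_entry: "Am $ x $ y = - Lp x y / \<mu> x"
  unfolding Am_def by simp

lemma Am_rowsum: "(\<Sum>y\<in>UNIV. Am $ x $ y) = 0"
  unfolding Am_entry by (simp add: sum_divide_distrib[symmetric] sum_negf Lp_rowsum)

lemma Am_rev: "\<mu> x * Am $ x $ y = \<mu> y * Am $ y $ x"
  using mu_pos[of x] mu_pos[of y] unfolding Am_entry by (simp add: Lp_sym)

lemma mu_Am: "\<mu> x * Am $ x $ y = - Lp x y"
  using mu_pos[of x] unfolding Am_entry by simp

lemma Am_off: "i \<noteq> j \<Longrightarrow> 0 \<le> Am $ i $ j"
proof -
  assume "i \<noteq> j"
  then have "Lp i j / \<mu> i \<le> 0" using Lp_off mu_pos by (intro divide_nonpos_pos) auto
  then show ?thesis unfolding Am_entry by simp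
qed

lemma P_nonneg: "0 \<le> t \<Longrightarrow> 0 \<le> P t x y"
  unfolding P_def by (rule ent_nonneg[OF Am_off])

lemma P_row: "(\<Sum>y\<in>UNIV. P t x y) = 1"
  unfolding P_def by (rule ent_rowsum[OF Am_rowsum])

lemma P_rev: "\<mu> x * P t x y = \<mu> y * P t y x"
  unfolding P_def by (rule ent_reversible[OF Am_rev])

lemma P_col: "(\<Sum>y\<in>UNIV. \<mu> y * P t y z) = \<mu> z"
proof -
  have "(\<Sum>y\<in>UNIV. \<mu> y * P t y z) = (\<Sum>y\<in>UNIV. \<mu> z * P t z y)"
    by (simp add: P_rev)
  also have "\<dots> = \<mu> z" by (simp add: sum_distrib_left[symmetric] P_row)
  finally show ?thesis .
qed

lemma P_semi: "P (s + t) x y = (\<Sum>z\<in>UNIV. P s x z * P t z y)"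
  unfolding P_def by (rule ent_semigroup)

lemma P_zero: "P 0 x y = (if x = y then 1 else 0)"
  unfolding P_def by (rule ent_zero)

lemma P_deriv: "((\<lambda>s. P s x y) has_field_derivative (\<Sum>m\<in>UNIV. Am $ x $ m * P s m y)) (at s)"
  unfolding P_def by (rule ent_deriv_left)

lemma heat_entry: "heat_kernel src tgt c w t $ x $ y = P t x y / \<mu> y"
proof -
  have "diag_mat (\<lambda>x. 1 / mu_w src tgt w x) ** laplacian src tgt c = - Am"
    by (simp add: vec_eq_iff diag_left lap_entry Am_entry \<mu>_def)
  then have "(- t) *\<^sub>R (diag_mat (\<lambda>x. 1 / mu_w src tgt w x) ** laplacian src tgt c) = t *\<^sub>R Am"
    by simp
  then show ?thesis
    unfolding heat_kernel_def Let_def diag_right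
    by (simp add: mat_exp_entry P_def \<mu>_def)
qed

end

context gsetup begin

definition "Dm t e f = sqrt (c e) * sqrt (c f) * (\<Sum>x\<in>UNIV. \<Sum>y\<in>UNIV. bb e x * (P t x y / \<mu> y) * bb f y)"

lemma integrand_eq: "integrand src tgt c w t = (\<Sum>e\<in>UNIV. \<Sum>f\<in>UNIV. w e * \<bar>Dm t e f\<bar> * w f)"
proof -
  have "(diag_mat (\<lambda>e. sqrt (c e)) ** incidence src tgt ** heat_kernel src tgt c w t ** transpose (incidence src tgt) **
          diag_mat (\<lambda>e. sqrt (c e))) $ e $ f = Dm t e f" for e f
  proof -
    have "(diag_mat (\<lambda>e. sqrt (c e)) ** incidence src tgt ** heat_kernel src tgt c w t ** transpose (incidence src tgt) **
          diag_mat (\<lambda>e. sqrt (c e))) $ e $ f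
        = (\<Sum>y\<in>UNIV. (\<Sum>x\<in>UNIV. sqrt (c e) * bb e x * (P t x y / \<mu> y)) * bb f y) * sqrt (c f)"
      by (simp only: mm_entry diag_ent sdl sdr transpose_ent inc_ent heat_entry)
    also have "\<dots> = sqrt (c e) * sqrt (c f) * (\<Sum>y\<in>UNIV. \<Sum>x\<in>UNIV. bb e x * (P t x y / \<mu> y) * bb f y)"
      by (simp add: sum_distrib_left sum_distrib_right mult_ac)
    also have "\<dots> = Dm t e f"
      unfolding Dm_def by (subst sum.swap) simp
    finally show ?thesis .
  qed
  then show ?thesis unfolding integrand_def Let_def by simp
qed

end

lemma ln_lower_aux:
  fixes x :: real assumes "1 \<le> x"
  shows "2 * (x - 1) / (x + 1) \<le> ln x"
proof -
  let ?f = "\<lambda>u::real. ln u - 2 * (u - 1) / (u + 1)"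
  have "?f 1 \<le> ?f x"
  proof (rule DERIV_nonneg_imp_nondecreasing[OF assms])
    fix u :: real assume u: "1 \<le> u" "u \<le> x"
    have "(?f has_real_derivative (1 / u - 4 / (u + 1)^2)) (at u)"
      using u by (auto intro!: derivative_eq_intros simp: field_simps power2_eq_square)
    moreover have "0 \<le> 1 / u - 4 / (u + 1)^2"
    proof -
      have up: "0 < u" "0 < (u + 1)^2" using u by auto
      have "(u + 1)^2 = (u - 1)^2 + 4 * u" by (simp add: power2_eq_square algebra_simps)
      moreover have "0 \<le> (u - 1)^2" by simp
      ultimately have "4 * u \<le> (u + 1)^2" by linarith
      then have "4 / (u + 1)^2 \<le> 1 / u" using up by (simp add: field_simps)
      then show ?thesis by simp
    qed
    ultimately show "\<exists>y. (?f has_real_derivative y) (at u) \<and> 0 \<le> y" by blast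
  qed
  then show ?thesis by simp
qed

lemma logmean:
  fixes p q :: real assumes "0 < p" "0 < q"
  shows "(p - q)^2 / ((p + q) / 2) \<le> (p - q) * (ln p - ln q)"
proof -
  have key: "(a - b)^2 / ((a + b) / 2) \<le> (a - b) * (ln a - ln b)" if ab: "0 < b" "b \<le> a" for a b :: real
  proof -
    have "2 * (a / b - 1) / (a / b + 1) \<le> ln (a / b)"
      using ab by (intro ln_lower_aux) simp
    also have "ln (a / b) = ln a - ln b" using ab by (simp add: ln_div)
    moreover have "2 * (a / b - 1) / (a / b + 1) = 2 * (a - b) / (a + b)"
    proof -
      have "a / b - 1 = (a - b) / b" "a / b + 1 = (a + b) / b" using ab by (simp_all add: field_simps)
      moreover have "a + b > 0" using ab by simp
      ultimately show ?thesis using ab by simp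
    qed
    ultimately have 1: "2 * (a - b) / (a + b) \<le> ln a - ln b" by simp
    have "(a - b)^2 / ((a + b) / 2) = (a - b) * (2 * (a - b) / (a + b))"
      by (simp add: power2_eq_square field_simps)
    also have "\<dots> \<le> (a - b) * (ln a - ln b)"
      using ab 1 by (intro mult_left_mono) auto
    finally show ?thesis .
  qed
  show ?thesis
  proof (cases "q \<le> p")
    case True then show ?thesis using key assms by blast
  next
    case False
    then have "(q - p)^2 / ((q + p) / 2) \<le> (q - p) * (ln q - ln p)" using key assms by simp
    then show ?thesis by (simp add: power2_commute algebra_simps)
  qed
qed

lemma xlnx_ge: "0 < (u::real) \<Longrightarrow> u - 1 \<le> u * ln u"
proof -
  assume u: "0 < u"
  have "ln (1 / u) \<le> 1 / u - 1" using u by (intro ln_le_minus_one) simp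
  then have "1 - 1 / u \<le> ln u" using u by (simp add: ln_div)
  then have "u * (1 - 1 / u) \<le> u * ln u" using u by (intro mult_left_mono) auto
  moreover have "u * (1 - 1 / u) = u - 1" using u by (simp add: field_simps)
  ultimately show ?thesis by simp
qed

context gsetup begin

definition "gg \<epsilon> s z y = (1 - \<epsilon>) * (P s y z / \<mu> z) + \<epsilon>"
definition "Ient \<epsilon> s z = (\<Sum>e\<in>UNIV. c e * nab e (gg \<epsilon> s z) * nab e (\<lambda>y. ln (gg \<epsilon> s z y)))"
definition "Phi \<epsilon> s z = (\<Sum>y\<in>UNIV. \<mu> y * (gg \<epsilon> s z y * ln (gg \<epsilon> s z y)))"

lemma gg_pos: "0 < \<epsilon> \<Longrightarrow> \<epsilon> < 1 \<Longrightarrow> 0 \<le> s \<Longrightarrow> 0 < gg \<epsilon> s z y"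
  unfolding gg_def using P_nonneg[of s y z] mu_pos[of z]
  by (intro add_nonneg_pos mult_nonneg_nonneg divide_nonneg_pos) auto

lemma gg_mu: "(\<Sum>y\<in>UNIV. \<mu> y * gg \<epsilon> s z y) = 1"
proof -
  have "(\<Sum>y\<in>UNIV. \<mu> y * gg \<epsilon> s z y) = (1 - \<epsilon>) / \<mu> z * (\<Sum>y\<in>UNIV. \<mu> y * P s y z) + \<epsilon> * (\<Sum>y\<in>UNIV. \<mu> y)"
    unfolding gg_def by (simp add: algebra_simps sum.distrib sum_distrib_left)
  also have "\<dots> = 1" using mu_pos[of z] by (simp add: P_col mu_total)
  finally show ?thesis .
qed

lemma sum_Lambda: "(\<Sum>e\<in>UNIV. (w e)^2 * ((g (tgt e) + g (src e)) / 2)) = W * (\<Sum>x\<in>UNIV. \<mu> x * g x)"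
  using mu_sum[of g] W_pos by (simp add: sum_divide_distrib[symmetric] add.commute)

lemma nab_gg: "nab e (gg \<epsilon> s z) = (1 - \<epsilon>) * nab e (\<lambda>x. P s x z / \<mu> z)"
  unfolding nab_eq gg_def by (simp add: algebra_simps)

lemma per_z:
  assumes "0 < \<epsilon>" "\<epsilon> < 1" "0 \<le> s"
  shows "(\<Sum>e\<in>UNIV. w e * sqrt (c e) * \<bar>nab e (\<lambda>x. P s x z / \<mu> z)\<bar>)^2 \<le> W / (1 - \<epsilon>)^2 * Ient \<epsilon> s z"
proof -
  define g where "g = gg \<epsilon> s z"
  define L where "L e = (g (tgt e) + g (src e)) / 2" for e
  have gpos: "0 < g x" for x unfolding g_def using gg_pos assms by blast
  have Lpos: "0 < L e" for e unfolding L_def using gpos[of "tgt e"] gpos[of "src e"] by simp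
  define a where "a e = w e * sqrt (L e)" for e
  define b where "b e = sqrt (c e) * \<bar>nab e g\<bar> / sqrt (L e)" for e
  have pt: "a e * b e = (1 - \<epsilon>) * (w e * sqrt (c e) * \<bar>nab e (\<lambda>x. P s x z / \<mu> z)\<bar>)" for e
  proof -
    have sL: "sqrt (L e) > 0" using Lpos[of e] by simp
    have "a e * b e = w e * sqrt (c e) * \<bar>nab e g\<bar> * (sqrt (L e) / sqrt (L e))"
      unfolding a_def b_def by (simp add: mult_ac)
    also have "\<dots> = w e * sqrt (c e) * \<bar>nab e g\<bar>" using sL by simp
    also have "\<bar>nab e g\<bar> = (1 - \<epsilon>) * \<bar>nab e (\<lambda>x. P s x z / \<mu> z)\<bar>"
      unfolding g_def nab_gg using assms by (simp add: abs_mult)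
    finally show ?thesis by (simp add: mult_ac)
  qed
  have "(\<Sum>e\<in>UNIV. a e * b e) = (1 - \<epsilon>) * (\<Sum>e\<in>UNIV. w e * sqrt (c e) * \<bar>nab e (\<lambda>x. P s x z / \<mu> z)\<bar>)"
    unfolding pt by (simp add: sum_distrib_left)
  then have "(\<Sum>e\<in>UNIV. w e * sqrt (c e) * \<bar>nab e (\<lambda>x. P s x z / \<mu> z)\<bar>) = (\<Sum>e\<in>UNIV. a e * b e) / (1 - \<epsilon>)"
    using assms by (simp add: field_simps)
  then have "(\<Sum>e\<in>UNIV. w e * sqrt (c e) * \<bar>nab e (\<lambda>x. P s x z / \<mu> z)\<bar>)^2 = (\<Sum>e\<in>UNIV. a e * b e)^2 / (1 - \<epsilon>)^2"
    by (simp add: power_divide)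
  also have "\<dots> \<le> ((\<Sum>e\<in>UNIV. (a e)^2) * (\<Sum>e\<in>UNIV. (b e)^2)) / (1 - \<epsilon>)^2"
    by (intro divide_right_mono Cauchy_Schwarz_ineq_sum) auto
  also have "(\<Sum>e\<in>UNIV. (a e)^2) = W"
  proof -
    have "(\<Sum>e\<in>UNIV. (a e)^2) = (\<Sum>e\<in>UNIV. (w e)^2 * L e)"
      unfolding a_def using Lpos by (simp add: power_mult_distrib less_imp_le)
    also have "\<dots> = W" unfolding L_def sum_Lambda g_def gg_mu by simp
    finally show ?thesis .
  qed
  also have "(\<Sum>e\<in>UNIV. (b e)^2) \<le> Ient \<epsilon> s z"
    unfolding Ient_def g_def[symmetric]
  proof (rule sum_mono)
    fix e
    have "(b e)^2 = c e * ((g (tgt e) - g (src e))^2 / L e)"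
      unfolding b_def nab_eq using Lpos[of e] cpos[of e]
      by (simp add: power_mult_distrib power_divide less_imp_le)
    also have "\<dots> \<le> c e * ((g (tgt e) - g (src e)) * (ln (g (tgt e)) - ln (g (src e))))"
      unfolding L_def using cpos[of e] gpos
      by (intro mult_left_mono logmean) auto
    also have "\<dots> = c e * nab e g * nab e (\<lambda>y. ln (g y))"
      by (simp add: nab_eq)
    finally show "(b e)^2 \<le> c e * nab e g * nab e (\<lambda>y. ln (g y))" .
  qed
  then have "W * (\<Sum>e\<in>UNIV. (b e)^2) / (1 - \<epsilon>)^2 \<le> W * Ient \<epsilon> s z / (1 - \<epsilon>)^2"
    using W_pos by (intro divide_right_mono mult_left_mono) auto
  finally show ?thesis by simp
qed

end

context gsetup begin

definition "hk s z x = P s x z / \<mu> z"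

lemma heat_split: "P (s + s) x y / \<mu> y = (\<Sum>z\<in>UNIV. \<mu> z * hk s z x * hk s z y)"
proof -
  have r: "P s z y / \<mu> y = P s y z / \<mu> z" for z
    using P_rev[of z s y] mu_pos[of z] mu_pos[of y] by (simp add: field_simps)
  have "P (s + s) x y / \<mu> y = (\<Sum>z\<in>UNIV. P s x z * (P s z y / \<mu> y))"
    unfolding P_semi by (simp add: sum_divide_distrib)
  also have "\<dots> = (\<Sum>z\<in>UNIV. \<mu> z * hk s z x * hk s z y)"
    unfolding r hk_def using mu_pos by (intro sum.cong refl) (simp add: field_simps power2_eq_square)
  finally show ?thesis .
qed

lemma Dm_split: "Dm (s + s) e f = sqrt (c e) * sqrt (c f) * (\<Sum>z\<in>UNIV. \<mu> z * nab e (hk s z) * nab f (hk s z))"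
proof -
  have "(\<Sum>x\<in>UNIV. \<Sum>y\<in>UNIV. bb e x * (P (s + s) x y / \<mu> y) * bb f y)
      = (\<Sum>x\<in>UNIV. \<Sum>y\<in>UNIV. \<Sum>z\<in>UNIV. \<mu> z * (bb e x * hk s z x) * (bb f y * hk s z y))"
    unfolding heat_split by (simp add: sum_distrib_left sum_distrib_right mult_ac)
  also have "\<dots> = (\<Sum>x\<in>UNIV. \<Sum>z\<in>UNIV. \<Sum>y\<in>UNIV. \<mu> z * (bb e x * hk s z x) * (bb f y * hk s z y))"
    by (intro sum.cong refl sum.swap)
  also have "\<dots> = (\<Sum>z\<in>UNIV. \<Sum>x\<in>UNIV. \<Sum>y\<in>UNIV. \<mu> z * (bb e x * hk s z x) * (bb f y * hk s z y))"
    by (rule sum.swap)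
  also have "\<dots> = (\<Sum>z\<in>UNIV. \<mu> z * nab e (hk s z) * nab f (hk s z))"
    unfolding nab_def by (simp add: sum_distrib_left sum_distrib_right mult_ac)
  finally show ?thesis unfolding Dm_def by simp
qed

lemma integrand_le:
  assumes "0 < \<epsilon>" "\<epsilon> < 1" "0 \<le> s"
  shows "integrand src tgt c w (s + s) \<le> W / (1 - \<epsilon>)^2 * (\<Sum>z\<in>UNIV. \<mu> z * Ient \<epsilon> s z)"
proof -
  define X where "X e z = w e * sqrt (c e) * \<bar>nab e (hk s z)\<bar>" for e z
  have "integrand src tgt c w (s + s) = (\<Sum>e\<in>UNIV. \<Sum>f\<in>UNIV. w e * \<bar>Dm (s + s) e f\<bar> * w f)"
    by (rule integrand_eq)
  also have "\<dots> \<le> (\<Sum>e\<in>UNIV. \<Sum>f\<in>UNIV. \<Sum>z\<in>UNIV. \<mu> z * (X e z * X f z))"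
  proof (intro sum_mono)
    fix e f
    have "\<bar>Dm (s + s) e f\<bar> = sqrt (c e) * sqrt (c f) * \<bar>\<Sum>z\<in>UNIV. \<mu> z * nab e (hk s z) * nab f (hk s z)\<bar>"
      unfolding Dm_split abs_mult using cpos[of e] cpos[of f] by simp
    also have "\<dots> \<le> sqrt (c e) * sqrt (c f) * (\<Sum>z\<in>UNIV. \<bar>\<mu> z * nab e (hk s z) * nab f (hk s z)\<bar>)"
      using cpos[of e] cpos[of f] by (intro mult_left_mono sum_abs) auto
    finally have "\<bar>Dm (s + s) e f\<bar> \<le> sqrt (c e) * sqrt (c f) * (\<Sum>z\<in>UNIV. \<bar>\<mu> z * nab e (hk s z) * nab f (hk s z)\<bar>)" .
    then have "w e * \<bar>Dm (s + s) e f\<bar> * w f \<le> w e * (sqrt (c e) * sqrt (c f) * (\<Sum>z\<in>UNIV. \<bar>\<mu> z * nab e (hk s z) * nab f (hk s z)\<bar>)) * w f"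
      using wpos[of e] wpos[of f] by (intro mult_right_mono mult_left_mono) auto
    also have "\<dots> = (\<Sum>z\<in>UNIV. \<mu> z * (X e z * X f z))"
      unfolding X_def using mu_pos wpos[of e] wpos[of f] cpos[of e] cpos[of f]
      by (simp add: sum_distrib_left sum_distrib_right abs_mult mult_ac abs_of_pos[OF mu_pos])
    finally show "w e * \<bar>Dm (s + s) e f\<bar> * w f \<le> (\<Sum>z\<in>UNIV. \<mu> z * (X e z * X f z))" .
  qed
  also have "\<dots> = (\<Sum>e\<in>UNIV. \<Sum>z\<in>UNIV. \<Sum>f\<in>UNIV. \<mu> z * (X e z * X f z))"
    by (intro sum.cong refl sum.swap)
  also have "\<dots> = (\<Sum>z\<in>UNIV. \<Sum>e\<in>UNIV. \<Sum>f\<in>UNIV. \<mu> z * (X e z * X f z))"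
    by (rule sum.swap)
  also have "\<dots> = (\<Sum>z\<in>UNIV. \<mu> z * (\<Sum>e\<in>UNIV. X e z)^2)"
  proof -
    have sq: "(\<Sum>e\<in>UNIV. X e z)^2 = (\<Sum>e\<in>UNIV. \<Sum>f\<in>UNIV. X e z * X f z)" for z
      by (simp only: power2_eq_square sum_product)
    show ?thesis unfolding sq by (simp add: sum_distrib_left)
  qed
  also have "\<dots> \<le> (\<Sum>z\<in>UNIV. \<mu> z * (W / (1 - \<epsilon>)^2 * Ient \<epsilon> s z))"
    unfolding X_def using mu_pos per_z[OF assms] unfolding hk_def
    by (intro sum_mono mult_left_mono) (auto simp: less_imp_le)
  also have "\<dots> = W / (1 - \<epsilon>)^2 * (\<Sum>z\<in>UNIV. \<mu> z * Ient \<epsilon> s z)"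
    by (simp add: sum_distrib_left mult_ac)
  finally show ?thesis .
qed

lemma dirichlet: "(\<Sum>y\<in>UNIV. \<Sum>m\<in>UNIV. u y * Lp y m * v m) = (\<Sum>e\<in>UNIV. c e * nab e u * nab e v)"
proof -
  have "(\<Sum>y\<in>UNIV. \<Sum>m\<in>UNIV. u y * Lp y m * v m) = (\<Sum>y\<in>UNIV. \<Sum>m\<in>UNIV. \<Sum>e\<in>UNIV. c e * (bb e y * u y) * (bb e m * v m))"
    unfolding Lp_def by (simp add: sum_distrib_left sum_distrib_right mult_ac)
  also have "\<dots> = (\<Sum>y\<in>UNIV. \<Sum>e\<in>UNIV. \<Sum>m\<in>UNIV. c e * (bb e y * u y) * (bb e m * v m))"
    by (intro sum.cong refl sum.swap)
  also have "\<dots> = (\<Sum>e\<in>UNIV. \<Sum>y\<in>UNIV. \<Sum>m\<in>UNIV. c e * (bb e y * u y) * (bb e m * v m))"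
    by (rule sum.swap)
  also have "\<dots> = (\<Sum>e\<in>UNIV. c e * nab e u * nab e v)"
    unfolding nab_def by (simp add: sum_distrib_left sum_distrib_right mult_ac)
  finally show ?thesis .
qed

lemma gg_deriv: "((\<lambda>s. gg \<epsilon> s z y) has_field_derivative (\<Sum>m\<in>UNIV. Am $ y $ m * gg \<epsilon> s z m)) (at s)"
proof -
  have "((\<lambda>s. gg \<epsilon> s z y) has_field_derivative (1 - \<epsilon>) * ((\<Sum>m\<in>UNIV. Am $ y $ m * P s m z) / \<mu> z)) (at s)"
    unfolding gg_def using less_imp_neq[OF mu_pos[of z], symmetric] by (auto intro!: derivative_eq_intros P_deriv)
  moreover have "(1 - \<epsilon>) * ((\<Sum>m\<in>UNIV. Am $ y $ m * P s m z) / \<mu> z) = (\<Sum>m\<in>UNIV. Am $ y $ m * gg \<epsilon> s z m)"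
    unfolding gg_def using Am_rowsum[of y] mu_pos[of z] less_imp_neq[OF mu_pos[of z]]
      sum_distrib_left[of \<epsilon> "\<lambda>m. Am $ y $ m" UNIV, symmetric]
    by (simp add: algebra_simps sum.distrib sum_distrib_left sum_divide_distrib sum_distrib_right[symmetric])
  ultimately show ?thesis by simp
qed

lemma Phi_deriv:
  assumes "0 < \<epsilon>" "\<epsilon> < 1" "0 \<le> s"
  shows "((\<lambda>s. Phi \<epsilon> s z) has_field_derivative - Ient \<epsilon> s z) (at s)"
proof -
  define g where "g = gg \<epsilon> s z"
  have gpos: "0 < g y" for y unfolding g_def using gg_pos assms by blast
  have dy: "((\<lambda>s. gg \<epsilon> s z y * ln (gg \<epsilon> s z y)) has_field_derivative
      gg \<epsilon> s z y * (1 / gg \<epsilon> s z y * (\<Sum>m\<in>UNIV. Am $ y $ m * gg \<epsilon> s z m))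
        + (\<Sum>m\<in>UNIV. Am $ y $ m * gg \<epsilon> s z m) * ln (gg \<epsilon> s z y)) (at s)" for y
    by (rule DERIV_mult'[OF gg_deriv DERIV_chain2[OF DERIV_ln_divide[OF gpos[unfolded g_def]] gg_deriv]])
  have "((\<lambda>s. Phi \<epsilon> s z) has_field_derivative
      (\<Sum>y\<in>UNIV. \<mu> y * (gg \<epsilon> s z y * (1 / gg \<epsilon> s z y * (\<Sum>m\<in>UNIV. Am $ y $ m * gg \<epsilon> s z m))
        + (\<Sum>m\<in>UNIV. Am $ y $ m * gg \<epsilon> s z m) * ln (gg \<epsilon> s z y)))) (at s)"
    unfolding Phi_def by (intro DERIV_sum DERIV_cmult dy)
  moreover have "(\<Sum>y\<in>UNIV. \<mu> y * (gg \<epsilon> s z y * (1 / gg \<epsilon> s z y * (\<Sum>m\<in>UNIV. Am $ y $ m * gg \<epsilon> s z m))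
        + (\<Sum>m\<in>UNIV. Am $ y $ m * gg \<epsilon> s z m) * ln (gg \<epsilon> s z y))) = - Ient \<epsilon> s z"
  proof -
    have "(\<Sum>y\<in>UNIV. \<mu> y * (g y * (1 / g y * (\<Sum>m\<in>UNIV. Am $ y $ m * g m)) + (\<Sum>m\<in>UNIV. Am $ y $ m * g m) * ln (g y)))
        = (\<Sum>y\<in>UNIV. \<Sum>m\<in>UNIV. (ln (g y) + 1) * (\<mu> y * Am $ y $ m) * g m)"
      using gpos less_imp_neq[OF gpos, symmetric]
      by (intro sum.cong refl) (simp add: sum_distrib_left sum_distrib_right sum.distrib algebra_simps)
    also have "\<dots> = - (\<Sum>y\<in>UNIV. \<Sum>m\<in>UNIV. (ln (g y) + 1) * Lp y m * g m)"
      by (simp add: mu_Am sum_negf)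
    also have "\<dots> = - (\<Sum>e\<in>UNIV. c e * nab e (\<lambda>y. ln (g y) + 1) * nab e g)"
      by (simp add: dirichlet)
    also have "\<dots> = - Ient \<epsilon> s z"
      unfolding Ient_def g_def by (simp add: nab_eq mult_ac)
    finally show ?thesis unfolding g_def .
  qed
  ultimately show ?thesis by simp
qed

lemma Phi_nonneg:
  assumes "0 < \<epsilon>" "\<epsilon> < 1" "0 \<le> s"
  shows "0 \<le> Phi \<epsilon> s z"
proof -
  have "(\<Sum>y\<in>UNIV. \<mu> y * (gg \<epsilon> s z y - 1)) \<le> Phi \<epsilon> s z"
    unfolding Phi_def using mu_pos gg_pos[OF assms]
    by (intro sum_mono mult_left_mono xlnx_ge) (auto simp: less_imp_le)
  moreover have "(\<Sum>y\<in>UNIV. \<mu> y * (gg \<epsilon> s z y - 1)) = 0"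
    using gg_mu[of \<epsilon> s z] mu_total by (simp add: right_diff_distrib sum_subtractf)
  ultimately show ?thesis by simp
qed

end

lemma nn_FTC_bound:
  fixes f F :: "real \<Rightarrow> real"
  assumes f_borel: "f \<in> borel_measurable borel"
  assumes f: "\<And>x. a \<le> x \<Longrightarrow> DERIV F x :> f x"
  assumes nonneg: "\<And>x. a \<le> x \<Longrightarrow> 0 \<le> f x"
  assumes bnd: "\<And>x. a \<le> x \<Longrightarrow> F x \<le> B"
  shows "(\<integral>\<^sup>+x. ennreal (f x) * indicator {a ..} x \<partial>lborel) \<le> ennreal (B - F a)"
proof -
  let ?f = "\<lambda>(i::nat) (x::real). ennreal (f x) * indicator {a..a + real i} x"
  let ?fR = "\<lambda>x. ennreal (f x) * indicator {a ..} x"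
  have "(SUP i. ?f i x) = ?fR x" for x
  proof (rule LIMSEQ_unique[OF LIMSEQ_SUP])
    obtain n where "x - a < real n"
      using reals_Archimedean2[of "x - a"] ..
    then have "eventually (\<lambda>n. ?f n x = ?fR x) sequentially"
      by (auto simp: frequently_def intro!: eventually_sequentiallyI[where c=n] split: split_indicator)
    then show "(\<lambda>n. ?f n x) \<longlonglongrightarrow> ?fR x"
      by (rule tendsto_eventually)
  qed (auto simp: nonneg incseq_def le_fun_def split: split_indicator)
  then have "integral\<^sup>N lborel ?fR = (\<integral>\<^sup>+ x. (SUP i. ?f i x) \<partial>lborel)"
    by simp
  also have "\<dots> = (SUP i. (\<integral>\<^sup>+ x. ?f i x \<partial>lborel))"
  proof (rule nn_integral_monotone_convergence_SUP)
    show "incseq ?f"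
      using nonneg by (auto simp: incseq_def le_fun_def split: split_indicator)
    show "\<And>i. (?f i) \<in> borel_measurable lborel"
      using f_borel by auto
  qed
  also have "\<dots> = (SUP i. ennreal (F (a + real i) - F a))"
    by (subst nn_integral_FTC_Icc[OF f_borel f nonneg]) auto
  also have "\<dots> \<le> ennreal (B - F a)"
    by (intro SUP_least ennreal_leI) (use bnd in auto)
  finally show ?thesis .
qed

context gsetup begin

definition "Jf \<epsilon> t = W / (1 - \<epsilon>)^2 * (\<Sum>z\<in>UNIV. \<mu> z * Ient \<epsilon> (t / 2) z)"
definition "Ff \<epsilon> t = - (W / (1 - \<epsilon>)^2) * (2 * (\<Sum>z\<in>UNIV. \<mu> z * Phi \<epsilon> (t / 2) z))"

lemma integrand_nonneg: "0 \<le> integrand src tgt c w t"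
  unfolding integrand_eq using wpos by (intro sum_nonneg mult_nonneg_nonneg) (auto simp: less_imp_le)

lemma integrand_le_J:
  assumes "0 < \<epsilon>" "\<epsilon> < 1" "0 \<le> t"
  shows "integrand src tgt c w t \<le> Jf \<epsilon> t"
  using integrand_le[OF assms(1,2), of "t / 2"] assms unfolding Jf_def by simp

lemma Ff_deriv:
  assumes "0 < \<epsilon>" "\<epsilon> < 1" "0 \<le> t"
  shows "DERIV (Ff \<epsilon>) t :> Jf \<epsilon> t"
proof -
  have d: "((\<lambda>t. Phi \<epsilon> (t / 2) z) has_field_derivative (- Ient \<epsilon> (t / 2) z) * (1 / 2)) (at t)" for z
    by (rule DERIV_chain2[OF Phi_deriv]) (use assms in \<open>auto intro!: derivative_eq_intros\<close>)
  have "DERIV (Ff \<epsilon>) t :> - (W / (1 - \<epsilon>)^2) * (2 * (\<Sum>z\<in>UNIV. \<mu> z * ((- Ient \<epsilon> (t / 2) z) * (1 / 2))))"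
    unfolding Ff_def[abs_def] by (intro DERIV_cmult DERIV_sum d)
  then show ?thesis unfolding Jf_def by (simp add: sum_negf sum_divide_distrib[symmetric])
qed

lemma Ff_le: "0 < \<epsilon> \<Longrightarrow> \<epsilon> < 1 \<Longrightarrow> 0 \<le> t \<Longrightarrow> Ff \<epsilon> t \<le> 0"
  unfolding Ff_def using W_pos mu_pos Phi_nonneg[of \<epsilon> "t / 2"]
  by (intro mult_nonpos_nonneg mult_nonneg_nonneg sum_nonneg) (auto simp: less_imp_le)

lemma gg_cont: "isCont (\<lambda>t. gg \<epsilon> (t / 2) z y) t"
proof -
  have "DERIV (\<lambda>t. gg \<epsilon> (t / 2) z y) t :> (\<Sum>m\<in>UNIV. Am $ y $ m * gg \<epsilon> (t / 2) z m) * (1 / 2)"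
    by (rule DERIV_chain2[OF gg_deriv]) (auto intro!: derivative_eq_intros)
  then show ?thesis by (rule DERIV_isCont)
qed

lemma gg_meas[measurable]: "(\<lambda>t. gg \<epsilon> (t / 2) z y) \<in> borel_measurable borel"
  by (rule borel_measurable_continuous_onI) (intro continuous_at_imp_continuous_on ballI gg_cont)

lemma Jf_meas: "Jf \<epsilon> \<in> borel_measurable borel"
  unfolding Jf_def[abs_def] Ient_def nab_eq by measurable

lemma bound_eps:
  assumes "0 < \<epsilon>" "\<epsilon> < 1"
  shows "(\<integral>\<^sup>+ t \<in> {0..}. ennreal (integrand src tgt c w t) \<partial>lborel)
     \<le> ennreal (2 * W / (1 - \<epsilon>)^2 * (\<Sum>z\<in>UNIV. \<mu> z * Phi \<epsilon> 0 z))"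
proof -
  have "(\<integral>\<^sup>+ t \<in> {0..}. ennreal (integrand src tgt c w t) \<partial>lborel) \<le> (\<integral>\<^sup>+ t. ennreal (Jf \<epsilon> t) * indicator {0..} t \<partial>lborel)"
    using integrand_le_J[OF assms]
    by (intro nn_integral_mono) (auto split: split_indicator intro!: ennreal_leI)
  also have "\<dots> \<le> ennreal (0 - Ff \<epsilon> 0)"
  proof (rule nn_FTC_bound[OF Jf_meas])
    show "\<And>x. 0 \<le> x \<Longrightarrow> DERIV (Ff \<epsilon>) x :> Jf \<epsilon> x" using Ff_deriv[OF assms] by blast
    show "\<And>x. 0 \<le> x \<Longrightarrow> 0 \<le> Jf \<epsilon> x"
      using integrand_le_J[OF assms] integrand_nonneg order_trans by blast
    show "\<And>x. 0 \<le> x \<Longrightarrow> Ff \<epsilon> x \<le> 0" using Ff_le[OF assms] by blast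
  qed
  also have "0 - Ff \<epsilon> 0 = 2 * W / (1 - \<epsilon>)^2 * (\<Sum>z\<in>UNIV. \<mu> z * Phi \<epsilon> 0 z)"
    unfolding Ff_def by simp
  finally show ?thesis .
qed

definition "U \<epsilon> = 2 * W / (1 - \<epsilon>)^2 * (\<Sum>z\<in>UNIV. \<mu> z * (\<mu> z * (((1 - \<epsilon>) / \<mu> z + \<epsilon>) * ln ((1 - \<epsilon>) / \<mu> z + \<epsilon>))))"

lemma Phi0_le:
  assumes "0 < \<epsilon>" "\<epsilon> < 1"
  shows "Phi \<epsilon> 0 z \<le> \<mu> z * (((1 - \<epsilon>) / \<mu> z + \<epsilon>) * ln ((1 - \<epsilon>) / \<mu> z + \<epsilon>))"
proof -
  have "Phi \<epsilon> 0 z \<le> (\<Sum>y\<in>UNIV. if y = z then \<mu> z * (((1 - \<epsilon>) / \<mu> z + \<epsilon>) * ln ((1 - \<epsilon>) / \<mu> z + \<epsilon>)) else 0)"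
    unfolding Phi_def
  proof (rule sum_mono)
    fix y
    show "\<mu> y * (gg \<epsilon> 0 z y * ln (gg \<epsilon> 0 z y)) \<le> (if y = z then \<mu> z * (((1 - \<epsilon>) / \<mu> z + \<epsilon>) * ln ((1 - \<epsilon>) / \<mu> z + \<epsilon>)) else 0)"
    proof (cases "y = z")
      case True then show ?thesis by (simp add: gg_def P_zero)
    next
      case False
      then have "gg \<epsilon> 0 z y = \<epsilon>" by (simp add: gg_def P_zero)
      moreover have "ln \<epsilon> \<le> 0" using assms by simp
      ultimately show ?thesis using False assms mu_pos[of y]
        by (simp add: mult_nonneg_nonpos)
    qed
  qed
  then show ?thesis by simp
qed

lemma bound_U:
  assumes "0 < \<epsilon>" "\<epsilon> < 1"
  shows "(\<integral>\<^sup>+ t \<in> {0..}. ennreal (integrand src tgt c w t) \<partial>lborel) \<le> ennreal (U \<epsilon>)"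
proof -
  have "2 * W / (1 - \<epsilon>)^2 * (\<Sum>z\<in>UNIV. \<mu> z * Phi \<epsilon> 0 z) \<le> U \<epsilon>"
    unfolding U_def using W_pos mu_pos Phi0_le[OF assms]
    by (intro mult_left_mono sum_mono) (auto simp: less_imp_le)
  then show ?thesis using bound_eps[OF assms] order_trans ennreal_leI by blast
qed

lemma U_lim: "(U \<longlongrightarrow> U 0) (at_right 0)"
proof -
  have "continuous (at_right 0) U"
    unfolding U_def using mu_pos less_imp_neq[OF mu_pos, symmetric]
    by (intro continuous_intros) (auto simp: less_imp_le)
  then show ?thesis by (simp add: continuous_within)
qed

lemma U0: "U 0 = 2 * W * entropy \<mu>"
  unfolding U_def entropy_def using mu_pos less_imp_neq[OF mu_pos, symmetric]
  by (simp add: ln_div sum_negf sum_distrib_left algebra_simps)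

lemma final_bound:
  "(\<integral>\<^sup>+ t \<in> {0..}. ennreal (integrand src tgt c w t) \<partial>lborel) \<le> ennreal (2 * W * entropy \<mu>)"
proof -
  have "((\<lambda>\<epsilon>. ennreal (U \<epsilon>)) \<longlongrightarrow> ennreal (U 0)) (at_right 0)"
    by (intro tendsto_ennrealI U_lim)
  moreover have "eventually (\<lambda>\<epsilon>. (\<integral>\<^sup>+ t \<in> {0..}. ennreal (integrand src tgt c w t) \<partial>lborel) \<le> ennreal (U \<epsilon>)) (at_right (0::real))"
    unfolding eventually_at_right[OF zero_less_one] using bound_U by (intro exI[of _ 1]) auto
  ultimately have "(\<integral>\<^sup>+ t \<in> {0..}. ennreal (integrand src tgt c w t) \<partial>lborel) \<le> ennreal (U 0)"
    by (intro tendsto_le[OF trivial_limit_at_right_real _ tendsto_const])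
  then show ?thesis by (simp add: U0)
qed

end

theorem lemma3p4:
  fixes src tgt :: "'e::finite \<Rightarrow> 'v::finite"
    and c w :: "'e \<Rightarrow> real"
  assumes "no_self_loops src tgt"
    and "graph_connected src tgt"
    and "CARD('v) \<ge> 2"
    and "\<forall>e. c e > 0"
    and "\<forall>e. w e > 0"
  shows "(\<integral>\<^sup>+ t \<in> {0..}. ennreal (integrand src tgt c w t) \<partial>lborel)
           \<le> ennreal (2 * (\<Sum>e\<in>UNIV. (w e)^2) * entropy (mu_w src tgt w))"
proof -
  have nsl: "\<And>e. src e \<noteq> tgt e" using assms(1) by (simp add: no_self_loops_def)
  have inc: "\<exists>e. x = src e \<or> x = tgt e" for x :: 'v
  proof -
    have "\<exists>y::'v. y \<noteq> x"
    proof (rule ccontr)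
      assume "\<not> (\<exists>y::'v. y \<noteq> x)"
      then have "(UNIV :: 'v set) = {x}" by auto
      then have "CARD('v) = card {x}" by (rule arg_cong)
      then have "CARD('v) = 1" by simp
      with assms(3) show False by simp
    qed
    then obtain y :: 'v where y: "y \<noteq> x" by blast
    have "(x, y) \<in> (adj_rel src tgt)\<^sup>*" using assms(2) by (simp add: graph_connected_def)
    then obtain z where "(x, z) \<in> adj_rel src tgt"
      using y by (cases rule: converse_rtranclE) auto
    then show ?thesis by (auto simp: adj_rel_def)
  qed
  interpret gsetup src tgt c w
    using nsl inc assms(4,5) by unfold_locales auto
  show ?thesis using final_bound by (simp add: W_def \<mu>_def)
qed

end
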